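(* Let $m\geq 2$ and $n\geq 2$ be integers, let $T_m$ be a tree of order $m$ and $K_n$ the complete graph of order $n$. Then $$\max\{rvc(T_m),\,n+2\}\leq rvcl(T_m\diamond K_n)\leq 2m+n-2.$$
   Context: All graphs are finite, simple, connected and undirected; $d$ denotes graph distance. A rainbow vertex $k$-coloring of $G$ is a map $c:V(G)\to\{1,\dots,k\}$ such that every two vertices are joined by a path whose internal vertices all receive distinct colors; $rvc(G)$ is the least $k$ for which $G$ has one. For such $c$ let $R_i=c^{-1}(i)$; the rainbow code of $v$ is $(d(v,R_1),\dots,d(v,R_k))$ with $d(v,R_i)=\min_{x\in R_i}d(v,x)$. A locating rainbow $k$-coloring is a rainbow vertex $k$-coloring in which distinct vertices have distinct rainbow codes; $rvcl(G)$ is the least $k$ for which one exists. For graphs $G_m$ (order $m$) and $H_n$ (order $n$) on disjoint vertex sets, the edge corona $G_m\diamond H_n$ is obtained from one copy of $G_m$ and $|E(G_m)|$ vertex-disjoint copies of $H_n$, one per edge of $G_m$, by joining both end vertices of the $j$-th edge of $G_m$ to every vertex of the $j$-th copy of $H_n$. *)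

theory Defs
  imports Main
begin

type_synonym 'a ugraph = "'a set \<times> 'a set set"

definition verts :: "'a ugraph \<Rightarrow> 'a set" where "verts G = fst G"
definition edges :: "'a ugraph \<Rightarrow> 'a set set" where "edges G = snd G"

definition adj :: "'a ugraph \<Rightarrow> 'a \<Rightarrow> 'a \<Rightarrow> bool" where
  "adj G u v \<longleftrightarrow> {u, v} \<in> edges G"

definition wf_graph :: "'a ugraph \<Rightarrow> bool" where
  "wf_graph G \<longleftrightarrow> finite (verts G) \<and>
     (\<forall>e\<in>edges G. \<exists>u v. e = {u, v} \<and> u \<noteq> v \<and> u \<in> verts G \<and> v \<in> verts G)"

definition is_path :: "'a ugraph \<Rightarrow> 'a list \<Rightarrow> 'a \<Rightarrow> 'a \<Rightarrow> bool" where
  "is_path G p u v \<longleftrightarrow> p \<noteq> [] \<and> hd p = u \<and> last p = v \<and> distinct p \<and>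
     set p \<subseteq> verts G \<and> (\<forall>i. Suc i < length p \<longrightarrow> adj G (p ! i) (p ! Suc i))"

definition connected_graph :: "'a ugraph \<Rightarrow> bool" where
  "connected_graph G \<longleftrightarrow> wf_graph G \<and> verts G \<noteq> {} \<and>
     (\<forall>u\<in>verts G. \<forall>v\<in>verts G. \<exists>p. is_path G p u v)"

definition is_cycle :: "'a ugraph \<Rightarrow> 'a list \<Rightarrow> bool" where
  "is_cycle G p \<longleftrightarrow> length p \<ge> 3 \<and> distinct p \<and> set p \<subseteq> verts G \<and>
     (\<forall>i. Suc i < length p \<longrightarrow> adj G (p ! i) (p ! Suc i)) \<and> adj G (last p) (hd p)"

definition is_tree :: "'a ugraph \<Rightarrow> bool" where
  "is_tree G \<longleftrightarrow> connected_graph G \<and> \<not> (\<exists>p. is_cycle G p)"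

definition is_complete :: "'a ugraph \<Rightarrow> bool" where
  "is_complete G \<longleftrightarrow> wf_graph G \<and> (\<forall>u\<in>verts G. \<forall>v\<in>verts G. u \<noteq> v \<longrightarrow> adj G u v)"

definition gdist :: "'a ugraph \<Rightarrow> 'a \<Rightarrow> 'a \<Rightarrow> nat" where
  "gdist G u v = (LEAST k. \<exists>p. is_path G p u v \<and> length p = Suc k)"

definition rainbow_vertex_coloring :: "'a ugraph \<Rightarrow> nat \<Rightarrow> ('a \<Rightarrow> nat) \<Rightarrow> bool" where
  "rainbow_vertex_coloring G k c \<longleftrightarrow> c ` verts G \<subseteq> {1..k} \<and>
     (\<forall>u\<in>verts G. \<forall>v\<in>verts G. u \<noteq> v \<longrightarrow>
        (\<exists>p. is_path G p u v \<and> inj_on c (set (butlast (tl p)))))"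

definition rvc :: "'a ugraph \<Rightarrow> nat" where
  "rvc G = (LEAST k. \<exists>c. rainbow_vertex_coloring G k c)"

definition dist_set :: "'a ugraph \<Rightarrow> 'a \<Rightarrow> 'a set \<Rightarrow> nat" where
  "dist_set G v R = Min ((\<lambda>x. gdist G v x) ` R)"

definition rainbow_code :: "'a ugraph \<Rightarrow> nat \<Rightarrow> ('a \<Rightarrow> nat) \<Rightarrow> 'a \<Rightarrow> nat list" where
  "rainbow_code G k c v = map (\<lambda>i. dist_set G v {x\<in>verts G. c x = i}) [1..<Suc k]"

definition locating_rainbow_coloring :: "'a ugraph \<Rightarrow> nat \<Rightarrow> ('a \<Rightarrow> nat) \<Rightarrow> bool" where
  "locating_rainbow_coloring G k c \<longleftrightarrow> rainbow_vertex_coloring G k c \<and>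
     inj_on (rainbow_code G k c) (verts G)"

definition rvcl :: "'a ugraph \<Rightarrow> nat" where
  "rvcl G = (LEAST k. \<exists>c. locating_rainbow_coloring G k c)"

text \<open>Edge corona G \<diamond> H: vertices Inl v (v in G) and Inr (e, h) (copy of h in the copy of H
  attached to the edge e of G).\<close>
definition edge_corona :: "'a ugraph \<Rightarrow> 'b ugraph \<Rightarrow> ('a + ('a set \<times> 'b)) ugraph" where
  "edge_corona G H =
    (Inl ` verts G \<union> {Inr (e, h) | e h. e \<in> edges G \<and> h \<in> verts H},
     {{Inl u, Inl v} | u v. {u, v} \<in> edges G}
     \<union> {{Inr (e, x), Inr (e, y)} | e x y. e \<in> edges G \<and> {x, y} \<in> edges H}
     \<union> {{Inl a, Inr (e, h)} | a e h. e \<in> edges G \<and> a \<in> e \<and> h \<in> verts H})"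

end

theory Submission
  imports Defs
begin

lemma is_path_succ: "is_path G p u v \<longleftrightarrow> p \<noteq> [] \<and> hd p = u \<and> last p = v \<and> distinct p \<and>
     set p \<subseteq> verts G \<and> successively (adj G) p"
  unfolding is_path_def successively_conv_nth by simp

lemma adj_sym: "adj G a b \<longleftrightarrow> adj G b a"
  unfolding adj_def by (simp add: insert_commute)

lemma is_path_rev: "is_path G p u v \<Longrightarrow> is_path G (rev p) v u"
  unfolding is_path_succ by (auto simp: hd_rev last_rev adj_sym)

lemma is_path_drop: "is_path G p u v \<Longrightarrow> i < length p \<Longrightarrow> is_path G (drop i p) (p ! i) v"
  unfolding is_path_def
  by (auto simp: hd_drop_conv_nth last_drop dest: in_set_dropD)

lemma is_path_single: "x \<in> verts G \<Longrightarrow> is_path G [x] x x"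
  unfolding is_path_def by auto

lemma gdist_le: "is_path G p x z \<Longrightarrow> gdist G x z \<le> length p - 1"
  unfolding gdist_def
  by (rule Least_le) (auto simp: is_path_def)

lemma gdist_path: "is_path G p x z \<Longrightarrow> \<exists>q. is_path G q x z \<and> length q = Suc (gdist G x z)"
  unfolding gdist_def
  apply (rule LeastI_ex)
  apply (rule exI[of _ "length p - 1"])
  apply (rule exI[of _ p])
  by (cases p) (auto simp: is_path_def)

lemma gdist_self: "x \<in> verts G \<Longrightarrow> gdist G x x = 0"
  using gdist_le[OF is_path_single] by fastforce

lemma gdist_0: "is_path G p x z \<Longrightarrow> gdist G x z = 0 \<Longrightarrow> x = z"
  using gdist_path[of G p x z] unfolding is_path_def
  by (metis One_nat_def last_ConsL length_0_conv length_Suc_conv list.sel(1))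

lemma path_two: "is_path G p x z \<Longrightarrow> length p = 2 \<Longrightarrow> adj G x z \<and> x \<noteq> z"
  unfolding is_path_def
  by (auto simp: numeral_2_eq_2 length_Suc_conv)

lemma path_verts: "is_path G p x z \<Longrightarrow> x \<in> verts G \<and> z \<in> verts G"
  unfolding is_path_def by (metis hd_in_set last_in_set subsetD)

lemma gdist_1: assumes "is_path G p x z" shows "gdist G x z = 1 \<longleftrightarrow> adj G x z \<and> x \<noteq> z"
proof
  assume "gdist G x z = 1"
  then show "adj G x z \<and> x \<noteq> z" using gdist_path[OF assms] path_two by fastforce
next
  assume a: "adj G x z \<and> x \<noteq> z"
  have "x \<in> verts G" "z \<in> verts G" using path_verts[OF assms] by auto
  then have "is_path G [x, z] x z" using a unfolding is_path_def by auto
  then have "gdist G x z \<le> 1" using gdist_le by fastforce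
  moreover have "gdist G x z \<noteq> 0" using gdist_0[OF assms] a by blast
  ultimately show "gdist G x z = 1" by simp
qed

definition conn :: "'a ugraph \<Rightarrow> bool" where
  "conn G \<longleftrightarrow> (\<forall>a\<in>verts G. \<forall>b\<in>verts G. \<exists>p. is_path G p a b)"

lemma conn_gdist_path: "conn G \<Longrightarrow> a \<in> verts G \<Longrightarrow> b \<in> verts G \<Longrightarrow>
   \<exists>q. is_path G q a b \<and> length q = Suc (gdist G a b)"
proof -
  assume "conn G" "a \<in> verts G" "b \<in> verts G"
  then obtain p where "is_path G p a b" unfolding conn_def by blast
  then show ?thesis by (rule gdist_path)
qed

lemma rainbow_conn: "rainbow_vertex_coloring G k c \<Longrightarrow> conn G"
  unfolding conn_def rainbow_vertex_coloring_def
  by (metis is_path_single)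

lemma twin_gdist_le:
  assumes cn: "conn G"
    and xy: "x \<noteq> y" "x \<in> verts G" "y \<in> verts G"
    and tw: "\<forall>z. z \<noteq> x \<longrightarrow> z \<noteq> y \<longrightarrow> (adj G x z \<longleftrightarrow> adj G y z)"
    and z: "z \<in> verts G" "z \<noteq> x" "z \<noteq> y"
  shows "gdist G y z \<le> gdist G x z"
proof -
  obtain p where p: "is_path G p x z" "length p = Suc (gdist G x z)"
    using conn_gdist_path[OF cn xy(2) z(1)] by blast
  then obtain r where pr: "p = x # r" unfolding is_path_def by (cases p) auto
  have rne: "r \<noteq> []" using p(1) pr z(2) unfolding is_path_def by auto
  show ?thesis
  proof (cases "y \<in> set r")
    case True
    then obtain i where i: "i < length r" "r ! i = y" by (meson in_set_conv_nth)
    have "is_path G (drop (Suc i) p) y z" using is_path_drop[OF p(1), of "Suc i"] i pr by simp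
    from gdist_le[OF this] show ?thesis using p(2) i pr by simp
  next
    case False
    have ps: "successively (adj G) (x # r)" "distinct (x # r)" "set (x#r) \<subseteq> verts G" "last (x # r) = z"
      using p(1) pr unfolding is_path_succ by auto
    have "adj G x (hd r)" using ps(1) rne by (simp add: successively_Cons)
    moreover have "hd r \<noteq> x" "hd r \<noteq> y" using ps(2) False rne by (auto dest: hd_in_set)
    ultimately have "adj G y (hd r)" using tw by blast
    then have "is_path G (y # r) y z" using ps rne False xy unfolding is_path_succ
      by (auto simp: successively_Cons)
    from gdist_le[OF this] show ?thesis using p(2) pr by simp
  qed
qed

lemma twin_gdist_eq:
  assumes cn: "conn G"
    and xy: "x \<noteq> y" "x \<in> verts G" "y \<in> verts G"
    and tw: "\<forall>z. z \<noteq> x \<longrightarrow> z \<noteq> y \<longrightarrow> (adj G x z \<longleftrightarrow> adj G y z)"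
    and z: "z \<in> verts G" "z \<noteq> x" "z \<noteq> y"
  shows "gdist G y z = gdist G x z"
proof -
  have tw': "\<forall>z. z \<noteq> y \<longrightarrow> z \<noteq> x \<longrightarrow> (adj G y z \<longleftrightarrow> adj G x z)" using tw by blast
  show ?thesis using twin_gdist_le[OF cn xy tw z] twin_gdist_le[OF cn xy(1)[symmetric] xy(3) xy(2) tw' z(1) z(3) z(2)]
    by simp
qed

lemma twin_img_sub:
  assumes cn: "conn G"
    and xy: "x \<noteq> y" "x \<in> verts G" "y \<in> verts G" "adj G x y"
    and tw: "\<forall>z. z \<noteq> x \<longrightarrow> z \<noteq> y \<longrightarrow> (adj G x z \<longleftrightarrow> adj G y z)"
    and R: "R \<subseteq> verts G" "x \<in> R \<longleftrightarrow> y \<in> R"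
  shows "(\<lambda>w. gdist G x w) ` R \<subseteq> (\<lambda>w. gdist G y w) ` R"
proof
  fix d assume "d \<in> (\<lambda>w. gdist G x w) ` R"
  then obtain w where w: "w \<in> R" "d = gdist G x w" by blast
  have pxy: "\<exists>p. is_path G p x y" "\<exists>p. is_path G p y x" using cn xy unfolding conn_def by auto
  have a1: "gdist G x y = 1" using pxy(1) gdist_1 xy by metis
  have a2: "gdist G y x = 1" using pxy(2) gdist_1 xy adj_sym by metis
  show "d \<in> (\<lambda>w. gdist G y w) ` R"
  proof (cases "w = x")
    case True
    then have "d = gdist G y y" using w xy gdist_self by metis
    then show ?thesis using R w True by blast
  next
    case False
    show ?thesis
    proof (cases "w = y")
      case True
      then have "d = gdist G y x" using w a1 a2 by simp
      then show ?thesis using R w True by blast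
    next
      case False2: False
      have "gdist G y w = gdist G x w" using twin_gdist_eq[OF cn xy(1-3) tw, of w] R w False False2 by blast
      then show ?thesis using w by force
    qed
  qed
qed

lemma twin_code:
  assumes cn: "conn G"
    and xy: "x \<noteq> y" "x \<in> verts G" "y \<in> verts G" "adj G x y"
    and tw: "\<forall>z. z \<noteq> x \<longrightarrow> z \<noteq> y \<longrightarrow> (adj G x z \<longleftrightarrow> adj G y z)"
    and c: "c x = c y"
  shows "rainbow_code G k c x = rainbow_code G k c y"
  unfolding rainbow_code_def
proof (rule map_cong[OF refl])
  fix i
  let ?R = "{w \<in> verts G. c w = i}"
  have tw': "\<forall>z. z \<noteq> y \<longrightarrow> z \<noteq> x \<longrightarrow> (adj G y z \<longleftrightarrow> adj G x z)" using tw by blast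
  have R: "?R \<subseteq> verts G" "x \<in> ?R \<longleftrightarrow> y \<in> ?R" using c xy by auto
  have ayx: "adj G y x" using xy(4) adj_sym by metis
  have R2: "y \<in> ?R \<longleftrightarrow> x \<in> ?R" using R(2) by blast
  have s1: "(\<lambda>w. gdist G x w) ` ?R \<subseteq> (\<lambda>w. gdist G y w) ` ?R"
    by (rule twin_img_sub[OF cn xy tw R])
  have s2: "(\<lambda>w. gdist G y w) ` ?R \<subseteq> (\<lambda>w. gdist G x w) ` ?R"
    by (rule twin_img_sub[OF cn xy(1)[symmetric] xy(3) xy(2) ayx tw' R(1) R2])
  have "(\<lambda>w. gdist G x w) ` ?R = (\<lambda>w. gdist G y w) ` ?R" using s1 s2 by (rule subset_antisym)
  then show "dist_set G x ?R = dist_set G y ?R" unfolding dist_set_def by simp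
qed

lemma full_code:
  assumes cn: "conn G" and fin: "finite (verts G)"
    and xy: "x \<noteq> y" "x \<in> verts G" "y \<in> verts G"
    and c: "c x = c y"
    and full: "\<forall>i\<in>{1..k}. i \<noteq> c x \<longrightarrow> (\<exists>w\<in>verts G. c w = i \<and> adj G x w \<and> adj G y w)"
  shows "rainbow_code G k c x = rainbow_code G k c y"
  unfolding rainbow_code_def
proof (rule map_cong[OF refl])
  fix i assume i: "i \<in> set [1..<Suc k]"
  let ?R = "{w \<in> verts G. c w = i}"
  have finR: "finite ?R" using fin by simp
  have D: "dist_set G a ?R = (if i = c x then 0 else 1)" if a: "a \<in> {x, y}" for a
  proof -
    have av: "a \<in> verts G" "c a = c x" using a xy c by auto
    show ?thesis
    proof (cases "i = c x")
      case True
      then have "a \<in> ?R" using av by auto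
      then have "0 \<in> (\<lambda>w. gdist G a w) ` ?R" using gdist_self av by (metis image_eqI)
      then show ?thesis unfolding dist_set_def using True finR
        by (metis (no_types, lifting) Min_eqI finite_imageI zero_le)
    next
      case False
      then obtain w where w: "w \<in> verts G" "c w = i" "adj G x w" "adj G y w" using full i by auto
      have "adj G a w" using w a by auto
      moreover obtain p where "is_path G p a w" using cn av w unfolding conn_def by blast
      moreover have "a \<noteq> w" using w av False by auto
      ultimately have "gdist G a w = 1" using gdist_1 by metis
      then have m: "1 \<in> (\<lambda>w. gdist G a w) ` ?R" using w by force
      have "\<forall>d\<in>(\<lambda>w. gdist G a w) ` ?R. 1 \<le> d"
      proof
        fix d assume "d \<in> (\<lambda>w. gdist G a w) ` ?R"
        then obtain w' where w': "w' \<in> ?R" "d = gdist G a w'" by blast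
        have "a \<noteq> w'" using w' av False by auto
        moreover obtain p where "is_path G p a w'" using cn av w' unfolding conn_def by blast
        ultimately show "1 \<le> d" using gdist_0 w' by (metis less_one not_le)
      qed
      then show ?thesis unfolding dist_set_def using False finR m
        by (metis (no_types, lifting) Min_eqI finite_imageI)
    qed
  qed
  show "dist_set G x ?R = dist_set G y ?R" using D[of x] D[of y] by simp
qed

lemma verts_C_Inl[simp]: "Inl a \<in> verts (edge_corona T K) \<longleftrightarrow> a \<in> verts T"
  unfolding edge_corona_def verts_def by auto

lemma verts_C_Inr[simp]: "Inr (e, h) \<in> verts (edge_corona T K) \<longleftrightarrow> e \<in> edges T \<and> h \<in> verts K"
  unfolding edge_corona_def verts_def by auto

lemma adj_C_ll[simp]: "adj (edge_corona T K) (Inl a) (Inl b) \<longleftrightarrow> {a, b} \<in> edges T"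
  unfolding edge_corona_def adj_def edges_def by (auto simp: doubleton_eq_iff insert_commute)

lemma adj_C_lr[simp]: "adj (edge_corona T K) (Inl a) (Inr (e, h)) \<longleftrightarrow> e \<in> edges T \<and> a \<in> e \<and> h \<in> verts K"
  unfolding edge_corona_def adj_def edges_def verts_def by (auto simp: doubleton_eq_iff insert_commute)

lemma adj_C_rl[simp]: "adj (edge_corona T K) (Inr (e, h)) (Inl a) \<longleftrightarrow> e \<in> edges T \<and> a \<in> e \<and> h \<in> verts K"
  using adj_C_lr adj_sym by metis

lemma adj_C_rr[simp]: "adj (edge_corona T K) (Inr (e, x)) (Inr (e', y)) \<longleftrightarrow> e = e' \<and> e \<in> edges T \<and> {x, y} \<in> edges K"
  unfolding edge_corona_def adj_def edges_def by (auto simp: doubleton_eq_iff insert_commute)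

lemma wf_edge: "wf_graph T \<Longrightarrow> {a, b} \<in> edges T \<Longrightarrow> a \<noteq> b \<and> a \<in> verts T \<and> b \<in> verts T"
  unfolding wf_graph_def by (metis doubleton_eq_iff)

lemma wf_edge2: "wf_graph T \<Longrightarrow> e \<in> edges T \<Longrightarrow> \<exists>a b. e = {a, b} \<and> a \<noteq> b \<and> a \<in> verts T \<and> b \<in> verts T"
  unfolding wf_graph_def by blast

lemma complete_edge: "is_complete K \<Longrightarrow> {x, y} \<in> edges K \<longleftrightarrow> x \<noteq> y \<and> x \<in> verts K \<and> y \<in> verts K"
  unfolding is_complete_def adj_def using wf_edge by metis

lemma finite_edges: "wf_graph T \<Longrightarrow> finite (edges T)"
proof -
  assume w: "wf_graph T"
  then have "edges T \<subseteq> Pow (verts T)" using wf_edge2[OF w] by blast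
  then show ?thesis using w unfolding wf_graph_def by (meson finite_Pow_iff finite_subset)
qed

lemma finite_C: "wf_graph T \<Longrightarrow> finite (verts K) \<Longrightarrow> finite (verts (edge_corona T K))"
proof -
  assume w: "wf_graph T" and k: "finite (verts K)"
  have "verts (edge_corona T K) = Inl ` verts T \<union> (\<lambda>(e, h). Inr (e, h)) ` (edges T \<times> verts K)"
    unfolding edge_corona_def verts_def by auto
  moreover have "finite (verts T)" using w unfolding wf_graph_def by simp
  ultimately show ?thesis using finite_edges[OF w] k by simp
qed

lemma leaf_exists:
  assumes tr: "is_tree T" and two: "card (verts T) \<ge> 2"
  shows "\<exists>u v. {u, v} \<in> edges T \<and> (\<forall>w. {u, w} \<in> edges T \<longrightarrow> w = v)"
proof -
  have wf: "wf_graph T" and cn: "\<forall>u\<in>verts T. \<forall>v\<in>verts T. \<exists>p. is_path T p u v"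
    and nc: "\<not> (\<exists>p. is_cycle T p)"
    using tr unfolding is_tree_def connected_graph_def by auto
  have fin: "finite (verts T)" using wf unfolding wf_graph_def by simp
  define P where "P p \<longleftrightarrow> is_path T p (hd p) (last p)" for p
  obtain a b where ab: "a \<in> verts T" "b \<in> verts T" "a \<noteq> b"
  proof -
    have "\<not> card (verts T) \<le> Suc 0" using two by simp
    then show ?thesis using that card_le_Suc0_iff_eq[OF fin] by blast
  qed
  obtain p0 where p0: "is_path T p0 a b" using cn ab by blast
  have "P p0" using p0 unfolding P_def is_path_def by auto
  moreover have "\<forall>q. P q \<longrightarrow> length q < Suc (card (verts T))"
    unfolding P_def is_path_def
    by (metis card_mono distinct_card fin less_Suc_eq_le)
  ultimately obtain p where p: "P p" and pmax: "\<forall>q. P q \<longrightarrow> length q \<le> length p"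
    using ex_has_greatest_nat[of P p0 length "Suc (card (verts T))"] by blast
  have "length p0 \<ge> 2"
  proof (cases p0)
    case Nil then show ?thesis using p0 by (simp add: is_path_def)
  next
    case (Cons x r) then show ?thesis using p0 ab by (cases r) (auto simp: is_path_def)
  qed
  then have len: "length p \<ge> 2" using pmax \<open>P p0\<close> by fastforce
  have ps: "distinct p" "set p \<subseteq> verts T" "successively (adj T) p" "p \<noteq> []"
    using p unfolding P_def is_path_succ by auto
  define u where "u = last p"
  define v where "v = p ! (length p - 2)"
  have lastu: "p ! (length p - 1) = u" unfolding u_def using ps(4) by (simp add: last_conv_nth)
  have si: "Suc (length p - 2) = length p - 1" "Suc (length p - 2) < length p" using len by arith+
  have "adj T v u" unfolding v_def using successively_nth[OF ps(3) si(2)] lastu si(1) by simp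
  then have uv: "{u, v} \<in> edges T" unfolding adj_def by (simp add: insert_commute)
  have "\<forall>w. {u, w} \<in> edges T \<longrightarrow> w = v"
  proof (intro allI impI)
    fix w assume uw: "{u, w} \<in> edges T"
    have wu: "w \<noteq> u" "w \<in> verts T" using wf_edge[OF wf uw] by auto
    show "w = v"
    proof (cases "w \<in> set p")
      case False
      have "P (p @ [w])" unfolding P_def is_path_succ using ps False wu uw
        by (auto simp: successively_append_iff u_def adj_def insert_commute)
      then show ?thesis using pmax by fastforce
    next
      case True
      then obtain j where j: "j < length p" "p ! j = w" by (meson in_set_conv_nth)
      have jne: "j \<noteq> length p - 1" using j lastu wu by auto
      show ?thesis
      proof (rule ccontr)
        assume "w \<noteq> v"
        then have "j \<noteq> length p - 2" unfolding v_def using j by auto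
        then have jl: "j < length p - 2" using j jne by arith
        have "is_cycle T (drop j p)"
          unfolding is_cycle_def
        proof (intro conjI)
          show "3 \<le> length (drop j p)" using jl by simp
          show "distinct (drop j p)" using ps by simp
          show "set (drop j p) \<subseteq> verts T" using ps by (meson order_trans set_drop_subset)
          show "\<forall>i. Suc i < length (drop j p) \<longrightarrow> adj T (drop j p ! i) (drop j p ! Suc i)"
            using ps(3) by (simp add: successively_conv_nth)
          show "adj T (last (drop j p)) (hd (drop j p))"
            using uw j jl unfolding adj_def u_def by (simp add: hd_drop_conv_nth)
        qed
        then show False using nc by blast
      qed
    qed
  qed
  then show ?thesis using uv by blast
qed

lemma leaf_nbr:
  assumes wf: "wf_graph T" and uv: "{u, v} \<in> edges T" and leaf: "\<forall>w. {u, w} \<in> edges T \<longrightarrow> w = v"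
    and s: "s \<in> insert (Inl u) ((\<lambda>h. Inr ({u, v}, h)) ` verts K)"
    and K: "is_complete K"
  shows "adj (edge_corona T K) s z \<longleftrightarrow>
     (z \<in> insert (Inl u) ((\<lambda>h. Inr ({u, v}, h)) ` verts K) \<or> z = Inl v) \<and> z \<noteq> s"
proof -
  have unv: "u \<noteq> v" using wf_edge[OF wf uv] by simp
  have e_iff: "e' \<in> edges T \<and> u \<in> e' \<longleftrightarrow> e' = {u, v}" for e'
  proof
    assume a: "e' \<in> edges T \<and> u \<in> e'"
    then obtain a b where ab: "e' = {a, b}" using wf_edge2[OF wf] by blast
    show "e' = {u, v}"
    proof (cases "a = u")
      case True
      then have "{u, b} \<in> edges T" using ab a by simp
      then have "b = v" using leaf by blast
      then show ?thesis using ab True by simp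
    next
      case False then have "b = u" using a ab by auto
      then have "{u, a} \<in> edges T" using a ab by (simp add: insert_commute)
      then have "a = v" using leaf by blast
      then show ?thesis using ab \<open>b = u\<close> by (simp add: insert_commute)
    qed
  qed (use uv in auto)
  show ?thesis
  proof (cases s)
    case (Inl a)
    then have a: "a = u" using s by auto
    show ?thesis
    proof (cases z)
      case (Inl w)
      have "{u, w} \<in> edges T \<longleftrightarrow> w = v" using leaf uv by blast
      then show ?thesis using Inl \<open>s = Inl a\<close> a unv by auto
    next
      case (Inr r)
      then obtain e' h where r: "z = Inr (e', h)" by (cases r) auto
      show ?thesis using e_iff[of e'] r \<open>s = Inl a\<close> a by auto
    qed
  next
    case (Inr r)
    then obtain h where h: "s = Inr ({u, v}, h)" "h \<in> verts K" using s by auto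
    show ?thesis
    proof (cases z)
      case (Inl w)
      then show ?thesis using h uv unv by auto
    next
      case (Inr r')
      then obtain e' h' where r: "z = Inr (e', h')" by (cases r') auto
      show ?thesis using h r uv complete_edge[OF K] by auto
    qed
  qed
qed

lemma lower_n2:
  assumes tr: "is_tree T" and m2: "card (verts T) \<ge> 2"
    and K: "is_complete K" and cK: "card (verts K) = n" and n2: "n \<ge> 2"
    and loc: "locating_rainbow_coloring (edge_corona T K) k c"
  shows "n + 2 \<le> k"
proof (rule ccontr)
  assume kn: "\<not> n + 2 \<le> k"
  let ?C = "edge_corona T K"
  have wf: "wf_graph T" using tr unfolding is_tree_def connected_graph_def by auto
  have finK: "finite (verts K)" using cK n2 card.infinite by fastforce
  have rb: "rainbow_vertex_coloring ?C k c" and inj: "inj_on (rainbow_code ?C k c) (verts ?C)"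
    using loc unfolding locating_rainbow_coloring_def by auto
  have cn: "conn ?C" using rainbow_conn[OF rb] .
  have finC: "finite (verts ?C)" using finite_C[OF wf finK] .
  have col: "c ` verts ?C \<subseteq> {1..k}" using rb unfolding rainbow_vertex_coloring_def by auto
  obtain u v where uv: "{u, v} \<in> edges T" and leaf: "\<forall>w. {u, w} \<in> edges T \<longrightarrow> w = v"
    using leaf_exists[OF tr m2] by blast
  have unv: "u \<noteq> v" "u \<in> verts T" "v \<in> verts T" using wf_edge[OF wf uv] by auto
  define S where "S = insert (Inl u) ((\<lambda>h. Inr ({u, v}, h)) ` verts K)"
  have nbr: "\<And>s z. s \<in> S \<Longrightarrow> adj ?C s z \<longleftrightarrow> (z \<in> S \<or> z = Inl v) \<and> z \<noteq> s"
    unfolding S_def using leaf_nbr[OF wf uv leaf _ K] by blast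
  have SC: "S \<subseteq> verts ?C" unfolding S_def using unv uv by auto
  have vS: "Inl v \<notin> S" unfolding S_def using unv by auto
  have vC: "Inl v \<in> verts ?C" using unv by simp
  have cardS: "card S = n + 1"
  proof -
    have "inj_on (\<lambda>h. Inr ({u, v}, h)) (verts K)" by (auto simp: inj_on_def)
    then have "card ((\<lambda>h. Inr ({u, v}, h)) ` verts K) = n" using cK card_image by metis
    moreover have "Inl u \<notin> (\<lambda>h. Inr ({u, v}, h)) ` verts K" by auto
    ultimately show ?thesis unfolding S_def using finK card_insert_disjoint
      by (metis Suc_eq_plus1 finite_imageI)
  qed
  have finS: "finite S" unfolding S_def using finK by simp
  have twin: "rainbow_code ?C k c x = rainbow_code ?C k c y" if xy: "x \<in> S" "y \<in> S" "x \<noteq> y" "c x = c y" for x y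
  proof (rule twin_code[OF cn xy(3)])
    show "x \<in> verts ?C" "y \<in> verts ?C" using xy SC by auto
    show "adj ?C x y" using nbr xy by blast
    show "\<forall>z. z \<noteq> x \<longrightarrow> z \<noteq> y \<longrightarrow> (adj ?C x z \<longleftrightarrow> adj ?C y z)" using nbr xy by blast
    show "c x = c y" by fact
  qed
  show False
  proof (cases "inj_on c S")
    case False
    then obtain x y where xy: "x \<in> S" "y \<in> S" "x \<noteq> y" "c x = c y" unfolding inj_on_def by blast
    then show False using twin[OF xy] inj SC unfolding inj_on_def by blast
  next
    case True
    have cS: "c ` S \<subseteq> {1..k}" using col SC by blast
    have "card (c ` S) = n + 1" using True cardS by (simp add: card_image)
    moreover have "card (c ` S) \<le> card {1..k}" using cS card_mono[OF finite_atLeastAtMost] by blast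
    ultimately have "card (c ` S) = card {1..k}" using kn by simp
    then have eq: "c ` S = {1..k}" using card_subset_eq[OF finite_atLeastAtMost cS] by blast
    then obtain x where x: "x \<in> S" "c x = c (Inl v)" using col vC by (metis image_iff image_subset_iff)
    have "rainbow_code ?C k c x = rainbow_code ?C k c (Inl v)"
    proof (rule full_code[OF cn finC])
      show "x \<noteq> Inl v" using x vS by auto
      show "x \<in> verts ?C" "Inl v \<in> verts ?C" using x SC vC by auto
      show "c x = c (Inl v)" by fact
      show "\<forall>i\<in>{1..k}. i \<noteq> c x \<longrightarrow> (\<exists>w\<in>verts ?C. c w = i \<and> adj ?C x w \<and> adj ?C (Inl v) w)"
      proof (intro ballI impI)
        fix i assume i: "i \<in> {1..k}" "i \<noteq> c x"
        then obtain w where w: "w \<in> S" "c w = i" using eq by (metis imageE)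
        have "adj ?C x w" using nbr[OF x(1)] w i by auto
        moreover have "w \<noteq> Inl v" using w vS by auto
        then have "adj ?C w (Inl v)" using nbr[OF w(1), of "Inl v"] by simp
        then have "adj ?C (Inl v) w" using adj_sym by metis
        ultimately show "\<exists>w\<in>verts ?C. c w = i \<and> adj ?C x w \<and> adj ?C (Inl v) w" using w SC by blast
      qed
    qed
    then show False using inj x SC vC vS unfolding inj_on_def by blast
  qed
qed

fun inls :: "('a + 'b) list \<Rightarrow> 'a list" where
  "inls [] = []"
| "inls (Inl a # r) = a # inls r"
| "inls (Inr b # r) = inls r"

lemma inls_append: "inls (xs @ ys) = inls xs @ inls ys"
  by (induction xs rule: inls.induct) auto

lemma set_inls: "set (inls xs) = {a. Inl a \<in> set xs}"
  by (induction xs rule: inls.induct) auto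

lemma distinct_inls: "distinct xs \<Longrightarrow> distinct (inls xs)"
  by (induction xs rule: inls.induct) (auto simp: set_inls)

lemma succ_distinct: "successively (\<lambda>a b. a = b \<or> R a b) xs \<Longrightarrow> distinct xs \<Longrightarrow> successively R xs"
  by (induction xs) (auto simp: successively_Cons dest: hd_in_set)

lemma inner_sub: "set (butlast (tl xs)) \<subseteq> set xs"
  by (cases xs) (auto dest: in_set_butlastD)

lemma tl_rev': "tl (rev xs) = rev (butlast xs)"
  by (induction xs rule: rev_induct) auto

lemma inner_rev: "set (butlast (tl (rev xs))) = set (butlast (tl xs))"
  by (simp add: tl_rev' butlast_tl)

lemma inner_set: "distinct xs \<Longrightarrow> xs \<noteq> [] \<Longrightarrow> hd xs \<noteq> last xs \<Longrightarrow>
   set (butlast (tl xs)) = set xs - {hd xs, last xs}"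
proof -
  assume d: "distinct xs" and ne: "xs \<noteq> []" and hl: "hd xs \<noteq> last xs"
  obtain x ys where xs: "xs = x # ys" using ne by (cases xs) auto
  have ys: "ys \<noteq> []" using xs hl by auto
  obtain zs z where zs: "ys = zs @ [z]" using ys rev_exhaust by blast
  show ?thesis using d xs zs by auto
qed

lemma proj_succ:
  assumes wf: "wf_graph T"
  shows "successively (adj (edge_corona T K)) p \<Longrightarrow> p \<noteq> [] \<Longrightarrow> (\<exists>a. last p = Inl a) \<Longrightarrow>
    successively (\<lambda>a b. a = b \<or> adj T a b) (inls p) \<and> inls p \<noteq> [] \<and>
    (\<forall>e h. hd p = Inr (e, h) \<longrightarrow> hd (inls p) \<in> e)"
proof (induction p)
  case Nil then show ?case by simp
next
  case (Cons x r)
  have same: "a = b \<or> adj T a b" if ee: "e \<in> edges T" "a \<in> e" "b \<in> e" for e a b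
  proof -
    obtain s t where "e = {s, t}" using wf_edge2[OF wf ee(1)] by blast
    then show ?thesis using ee unfolding adj_def by (auto simp: insert_commute)
  qed
  show ?case
  proof (cases "r = []")
    case True
    then show ?thesis using Cons.prems by auto
  next
    case False
    have IH: "successively (\<lambda>a b. a = b \<or> adj T a b) (inls r) \<and> inls r \<noteq> [] \<and>
      (\<forall>e h. hd r = Inr (e, h) \<longrightarrow> hd (inls r) \<in> e)"
      using Cons.IH Cons.prems False by (auto simp: successively_Cons)
    have ad: "adj (edge_corona T K) x (hd r)" using Cons.prems False by (simp add: successively_Cons)
    obtain y r' where r: "r = y # r'" using False by (cases r) auto
    show ?thesis
    proof (cases x)
      case (Inl a)
      have "a = hd (inls r) \<or> adj T a (hd (inls r))"
      proof (cases y)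
        case (Inl a')
        then show ?thesis using ad r \<open>x = Inl a\<close> by (simp add: adj_def[of T])
      next
        case (Inr q)
        then obtain e h where q: "y = Inr (e, h)" by (cases q) auto
        then show ?thesis using ad r \<open>x = Inl a\<close> IH same by auto
      qed
      then show ?thesis using IH \<open>x = Inl a\<close> by (cases "inls r") (auto simp: successively_Cons)
    next
      case (Inr q)
      then obtain e h where q: "x = Inr (e, h)" by (cases q) auto
      have "hd (inls r) \<in> e"
      proof (cases y)
        case (Inl b)
        then show ?thesis using ad r q by auto
      next
        case (Inr q')
        then obtain e' h' where q': "y = Inr (e', h')" by (cases q') auto
        then show ?thesis using ad r q IH by auto
      qed
      then show ?thesis using IH q by auto
    qed
  qed
qed

lemma rvc_le:
  assumes wf: "wf_graph T" and rb: "rainbow_vertex_coloring (edge_corona T K) k c"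
  shows "rvc T \<le> k"
proof -
  let ?C = "edge_corona T K"
  have "rainbow_vertex_coloring T k (c \<circ> Inl)"
    unfolding rainbow_vertex_coloring_def
  proof (intro conjI ballI impI)
    show "(c \<circ> Inl) ` verts T \<subseteq> {1..k}" using rb unfolding rainbow_vertex_coloring_def by auto
    fix u v assume uv: "u \<in> verts T" "v \<in> verts T" "u \<noteq> v"
    have rbp: "\<forall>x\<in>verts ?C. \<forall>y\<in>verts ?C. x \<noteq> y \<longrightarrow> (\<exists>p. is_path ?C p x y \<and> inj_on c (set (butlast (tl p))))"
      using rb unfolding rainbow_vertex_coloring_def by blast
    have "\<exists>p. is_path ?C p (Inl u) (Inl v) \<and> inj_on c (set (butlast (tl p)))"
      using rbp[rule_format, of "Inl u" "Inl v"] uv by simp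
    then obtain p where p: "is_path ?C p (Inl u) (Inl v)" "inj_on c (set (butlast (tl p)))" by blast
    have ps: "p \<noteq> []" "hd p = Inl u" "last p = Inl v" "distinct p" "set p \<subseteq> verts ?C"
      "successively (adj ?C) p" using p(1) unfolding is_path_succ by auto
    have pr: "successively (\<lambda>a b. a = b \<or> adj T a b) (inls p)" "inls p \<noteq> []"
      using proj_succ[OF wf ps(6) ps(1)] ps(3) by auto
    obtain r where r: "p = Inl u # r" using ps(1,2) by (cases p) auto
    have hq: "hd (inls p) = u" using r by simp
    have "p = butlast p @ [Inl v]" using ps(1,3) by (metis append_butlast_last_id)
    then have lq: "last (inls p) = v" using inls_append[of "butlast p" "[Inl v]"] by (metis inls.simps(1,2) last_snoc)
    have dq: "distinct (inls p)" using distinct_inls ps(4) by blast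
    have sq: "set (inls p) \<subseteq> verts T" using ps(5) by (auto simp: set_inls)
    have path: "is_path T (inls p) u v" unfolding is_path_succ using pr hq lq dq sq succ_distinct by blast
    have "Inl ` set (butlast (tl (inls p))) \<subseteq> set (butlast (tl p))"
      using inner_set[OF dq pr(2)] inner_set[OF ps(4) ps(1)] hq lq ps uv by (auto simp: set_inls)
    then have "inj_on (c \<circ> Inl) (set (butlast (tl (inls p))))"
      unfolding inj_on_def
    proof (intro ballI impI)
      fix a b assume ab: "a \<in> set (butlast (tl (inls p)))" "b \<in> set (butlast (tl (inls p)))"
        "(c \<circ> Inl) a = (c \<circ> Inl) b"
        and sub: "Inl ` set (butlast (tl (inls p))) \<subseteq> set (butlast (tl p))"
      have ib: "Inl a \<in> set (butlast (tl p))" "Inl b \<in> set (butlast (tl p))" using ab sub by auto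
      have "c (Inl a) = c (Inl b)" using ab(3) by simp
      from inj_onD[OF p(2) this ib] have "(Inl a :: 'a + 'a set \<times> 'b) = Inl b" .
      then show "a = b" by simp
    qed
    then show "\<exists>p. is_path T p u v \<and> inj_on (c \<circ> Inl) (set (butlast (tl p)))" using path by blast
  qed
  then have "\<exists>c. rainbow_vertex_coloring T k c" by blast
  then show ?thesis unfolding rvc_def by (rule Least_le)
qed

lemma same_color:
  assumes cn: "conn G" and fin: "finite (verts G)" and xy: "x \<in> verts G" "y \<in> verts G"
    and col: "c ` verts G \<subseteq> {1..k}" and eq: "rainbow_code G k c x = rainbow_code G k c y"
  shows "c x = c y"
proof -
  let ?R = "{w \<in> verts G. c w = c x}"
  have i: "c x \<in> set [1..<Suc k]" using col xy by auto
  have d: "dist_set G x ?R = dist_set G y ?R"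
    using eq i unfolding rainbow_code_def map_eq_conv by blast
  have finR: "finite ?R" using fin by simp
  have xR: "x \<in> ?R" using xy by simp
  have "0 \<in> (\<lambda>w. gdist G x w) ` ?R" using gdist_self xy xR by (metis image_eqI)
  then have "dist_set G x ?R = 0" unfolding dist_set_def using finR
    by (metis (no_types, lifting) Min_eqI finite_imageI zero_le)
  then have "Min ((\<lambda>w. gdist G y w) ` ?R) = 0" using d unfolding dist_set_def by simp
  moreover have "Min ((\<lambda>w. gdist G y w) ` ?R) \<in> (\<lambda>w. gdist G y w) ` ?R"
    using finR xR by (intro Min_in) auto
  ultimately obtain w where w: "w \<in> ?R" "gdist G y w = 0" by (metis (no_types, lifting) imageE)
  obtain p where "is_path G p y w" using cn xy w unfolding conn_def by blast
  then have "y = w" using gdist_0 w by metis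
  then show ?thesis using w by simp
qed

lemma map_Inl_path: "is_path T tp a b \<Longrightarrow> is_path (edge_corona T K) (map Inl tp) (Inl a) (Inl b)"
  unfolding is_path_succ
  by (auto simp: successively_map hd_map last_map distinct_map adj_def[of T])

lemma path_lr:
  assumes wf: "wf_graph T" and cT: "\<forall>u\<in>verts T. \<forall>v\<in>verts T. \<exists>p. is_path T p u v"
    and a: "a \<in> verts T" and e: "e \<in> edges T" and h: "h \<in> verts K"
  shows "\<exists>p. is_path (edge_corona T K) p (Inl a) (Inr (e, h)) \<and> set (butlast (tl p)) \<subseteq> Inl ` verts T"
proof -
  obtain s t where st: "e = {s, t}" "s \<in> verts T" using wf_edge2[OF wf e] by blast
  obtain tp where tp: "is_path T tp a s" using cT a st by blast
  have mp: "is_path (edge_corona T K) (map Inl tp) (Inl a) (Inl s)" using map_Inl_path[OF tp] .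
  have ne: "tp \<noteq> []" using tp unfolding is_path_def by simp
  let ?p = "map Inl tp @ [Inr (e, h)]"
  have "is_path (edge_corona T K) ?p (Inl a) (Inr (e, h))"
    using mp ne e h st unfolding is_path_succ by (auto simp: successively_append_iff)
  moreover have "set (butlast (tl ?p)) \<subseteq> Inl ` verts T"
    using ne tp unfolding is_path_def by (cases tp) auto
  ultimately show ?thesis by blast
qed

lemma path_rr:
  assumes wf: "wf_graph T" and cT: "\<forall>u\<in>verts T. \<forall>v\<in>verts T. \<exists>p. is_path T p u v"
    and e: "e \<in> edges T" "e' \<in> edges T" "e \<noteq> e'" and h: "h \<in> verts K" "h' \<in> verts K"
  shows "\<exists>p. is_path (edge_corona T K) p (Inr (e, h)) (Inr (e', h')) \<and> set (butlast (tl p)) \<subseteq> Inl ` verts T"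
proof -
  obtain s t where st: "e = {s, t}" "s \<in> verts T" using wf_edge2[OF wf e(1)] by blast
  obtain s' t' where st': "e' = {s', t'}" "s' \<in> verts T" using wf_edge2[OF wf e(2)] by blast
  obtain tp where tp: "is_path T tp s s'" using cT st st' by blast
  have mp: "is_path (edge_corona T K) (map Inl tp) (Inl s) (Inl s')" using map_Inl_path[OF tp] .
  have ne: "tp \<noteq> []" using tp unfolding is_path_def by simp
  let ?p = "Inr (e, h) # map Inl tp @ [Inr (e', h')]"
  have "is_path (edge_corona T K) ?p (Inr (e, h)) (Inr (e', h'))"
    using mp ne e h st st' unfolding is_path_succ
    by (auto simp: successively_append_iff successively_Cons hd_map)
  moreover have "set (butlast (tl ?p)) \<subseteq> Inl ` verts T"
    using tp unfolding is_path_def by auto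
  ultimately show ?thesis by blast
qed

lemma edge_diff:
  assumes wf: "wf_graph T" and e: "e \<in> edges T" "e' \<in> edges T" "e \<noteq> e'"
  shows "\<exists>s. s \<in> e \<and> s \<notin> e'"
proof (rule ccontr)
  assume "\<not> ?thesis"
  then have sub: "e \<subseteq> e'" by blast
  obtain a b where ab: "e = {a, b}" "a \<noteq> b" using wf_edge2[OF wf e(1)] by blast
  obtain a' b' where ab': "e' = {a', b'}" "a' \<noteq> b'" using wf_edge2[OF wf e(2)] by blast
  have "card e = card e'" using ab ab' by simp
  then have "e = e'" using card_subset_eq[OF _ sub] ab' by simp
  then show False using e by simp
qed

lemma upper:
  assumes tr: "is_tree T" and cT: "card (verts T) = m"
    and K: "is_complete K" and cK: "card (verts K) = n" and n2: "n \<ge> 2"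
  shows "\<exists>c. locating_rainbow_coloring (edge_corona T K) (m + n) c"
proof -
  let ?C = "edge_corona T K"
  have wf: "wf_graph T" and connT: "\<forall>u\<in>verts T. \<forall>v\<in>verts T. \<exists>p. is_path T p u v"
    using tr unfolding is_tree_def connected_graph_def by auto
  have finT: "finite (verts T)" using wf unfolding wf_graph_def by simp
  have finK: "finite (verts K)" using cK n2 card.infinite by fastforce
  have finC: "finite (verts ?C)" using finite_C[OF wf finK] .
  obtain f where f: "bij_betw f (verts T) {0..<m}" using ex_bij_betw_finite_nat[OF finT] cT by blast
  obtain g where g: "bij_betw g (verts K) {0..<n}" using ex_bij_betw_finite_nat[OF finK] cK by blast
  have fi: "inj_on f (verts T)" "\<And>a. a \<in> verts T \<Longrightarrow> f a < m" using f unfolding bij_betw_def by auto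
  have gi: "inj_on g (verts K)" "\<And>h. h \<in> verts K \<Longrightarrow> g h < n" using g unfolding bij_betw_def by auto
  define c :: "'a + 'a set \<times> 'b \<Rightarrow> nat" where "c = case_sum (\<lambda>a. Suc (f a)) (\<lambda>q. m + Suc (g (snd q)))"
  have cl[simp]: "c (Inl a) = Suc (f a)" for a unfolding c_def by simp
  have cr[simp]: "c (Inr (e, h)) = m + Suc (g h)" for e h unfolding c_def by simp
  have col: "c ` verts ?C \<subseteq> {1..m + n}"
  proof
    fix z assume "z \<in> c ` verts ?C"
    then obtain x where x: "x \<in> verts ?C" "z = c x" by blast
    show "z \<in> {1..m + n}"
    proof (cases x)
      case (Inl a) then show ?thesis using x fi(2)[of a] by auto
    next
      case (Inr q) then obtain e h where "x = Inr (e, h)" by (cases q) auto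
      then show ?thesis using x gi(2)[of h] by auto
    qed
  qed
  have good: "\<exists>p. is_path ?C p x y \<and> set (butlast (tl p)) \<subseteq> Inl ` verts T"
    if xy: "x \<in> verts ?C" "y \<in> verts ?C" "x \<noteq> y" for x y
  proof (cases x)
    case (Inl a)
    show ?thesis
    proof (cases y)
      case (Inl b)
      obtain tp where tp: "is_path T tp a b" using connT xy \<open>x = Inl a\<close> Inl by auto
      have "set (butlast (tl (map Inl tp))) \<subseteq> Inl ` verts T"
        using inner_sub[of "map Inl tp"] tp unfolding is_path_def by auto
      then show ?thesis using map_Inl_path[OF tp, of K] \<open>x = Inl a\<close> Inl by blast
    next
      case (Inr q) then obtain e h where "y = Inr (e, h)" by (cases q) auto
      then show ?thesis using path_lr[OF wf connT, of a e h K] xy \<open>x = Inl a\<close> by auto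
    qed
  next
    case (Inr q) then obtain e h where xq: "x = Inr (e, h)" by (cases q) auto
    show ?thesis
    proof (cases y)
      case (Inl b)
      obtain p where p: "is_path ?C p (Inl b) (Inr (e, h))" "set (butlast (tl p)) \<subseteq> Inl ` verts T"
        using path_lr[OF wf connT, of b e h K] xy xq Inl by auto
      then show ?thesis using is_path_rev[OF p(1)] inner_rev[of p] xq Inl by auto
    next
      case (Inr q') then obtain e' h' where yq: "y = Inr (e', h')" by (cases q') auto
      show ?thesis
      proof (cases "e = e'")
        case True
        then have "h \<noteq> h'" using xy xq yq by auto
        then have "is_path ?C [x, y] x y" using xy xq yq True complete_edge[OF K]
          unfolding is_path_def by auto
        then show ?thesis by force
      next
        case False
        then show ?thesis using path_rr[OF wf connT, of e e' h K h'] xy xq yq by auto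
      qed
    qed
  qed
  have rb: "rainbow_vertex_coloring ?C (m + n) c"
    unfolding rainbow_vertex_coloring_def
  proof (intro conjI ballI impI)
    show "c ` verts ?C \<subseteq> {1..m + n}" by (rule col)
    fix x y assume xy: "x \<in> verts ?C" "y \<in> verts ?C" "x \<noteq> y"
    obtain p where p: "is_path ?C p x y" "set (butlast (tl p)) \<subseteq> Inl ` verts T" using good[OF xy] by blast
    have "inj_on c (Inl ` verts T)" using fi(1) unfolding inj_on_def by auto
    then have "inj_on c (set (butlast (tl p)))" using p(2) inj_on_subset by blast
    then show "\<exists>p. is_path ?C p x y \<and> inj_on c (set (butlast (tl p)))" using p(1) by blast
  qed
  have cn: "conn ?C" using rainbow_conn[OF rb] .
  have "inj_on (rainbow_code ?C (m + n) c) (verts ?C)"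
  proof (rule inj_onI)
    fix x y assume xy: "x \<in> verts ?C" "y \<in> verts ?C" and eq: "rainbow_code ?C (m + n) c x = rainbow_code ?C (m + n) c y"
    have cxy: "c x = c y" using same_color[OF cn finC xy col eq] .
    show "x = y"
    proof (cases x)
      case (Inl a)
      show ?thesis
      proof (cases y)
        case (Inl b)
        then show ?thesis using cxy \<open>x = Inl a\<close> xy fi(1) unfolding inj_on_def by auto
      next
        case (Inr q) then obtain e h where "y = Inr (e, h)" by (cases q) auto
        then show ?thesis using cxy \<open>x = Inl a\<close> xy fi(2)[of a] by auto
      qed
    next
      case (Inr q) then obtain e h where xq: "x = Inr (e, h)" by (cases q) auto
      show ?thesis
      proof (cases y)
        case (Inl b)
        then show ?thesis using cxy xq xy fi(2)[of b] by auto
      next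
        case (Inr q') then obtain e' h' where yq: "y = Inr (e', h')" by (cases q') auto
        have hh: "h = h'" using cxy xq yq xy gi(1) unfolding inj_on_def by auto
        show ?thesis
        proof (rule ccontr)
          assume "x \<noteq> y"
          then have ee: "e \<noteq> e'" using xq yq hh by simp
          have eT: "e \<in> edges T" "e' \<in> edges T" "h \<in> verts K" using xy xq yq by auto
          obtain s where s: "s \<in> e" "s \<notin> e'" using edge_diff[OF wf eT(1,2) ee] by blast
          have sT: "s \<in> verts T" using s eT wf_edge2[OF wf eT(1)] by auto
          let ?i = "Suc (f s)"
          have R: "{w \<in> verts ?C. c w = ?i} = {Inl s}"
          proof (intro equalityI subsetI)
            fix w assume w: "w \<in> {w \<in> verts ?C. c w = ?i}"
            show "w \<in> {Inl s}"
            proof (cases w)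
              case (Inl b) then show ?thesis using w sT fi(1) unfolding inj_on_def by auto
            next
              case (Inr q'') then obtain e'' h'' where "w = Inr (e'', h'')" by (cases q'') auto
              then show ?thesis using w fi(2)[OF sT] by auto
            qed
          qed (use sT in auto)
          have i: "?i \<in> set [1..<Suc (m + n)]" using fi(2)[OF sT] by auto
          have "\<forall>j\<in>set [1..<Suc (m + n)]. dist_set ?C x {w \<in> verts ?C. c w = j} = dist_set ?C y {w \<in> verts ?C. c w = j}"
            using eq unfolding rainbow_code_def map_eq_conv .
          then have "dist_set ?C x {w \<in> verts ?C. c w = ?i} = dist_set ?C y {w \<in> verts ?C. c w = ?i}"
            using i by blast
          then have d: "dist_set ?C x {Inl s} = dist_set ?C y {Inl s}" unfolding R .
          then have dd: "gdist ?C x (Inl s) = gdist ?C y (Inl s)" unfolding dist_set_def by simp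
          have sC: "Inl s \<in> verts ?C" using sT by simp
          obtain p1 where p1: "is_path ?C p1 x (Inl s)" using cn xy(1) sC unfolding conn_def by blast
          obtain p2 where p2: "is_path ?C p2 y (Inl s)" using cn xy(2) sC unfolding conn_def by blast
          have "gdist ?C x (Inl s) = 1" using gdist_1[OF p1] xq eT s by simp
          moreover have "gdist ?C y (Inl s) \<noteq> 1" using gdist_1[OF p2] yq s by simp
          ultimately show False using dd by simp
        qed
      qed
    qed
  qed
  then show ?thesis using rb unfolding locating_rainbow_coloring_def by blast
qed

theorem lemma5:
  fixes T :: "'a ugraph" and K :: "'b ugraph" and m n :: nat
  assumes "is_tree T" and "card (verts T) = m" and "m \<ge> 2"
    and "is_complete K" and "card (verts K) = n" and "n \<ge> 2"
  shows "max (rvc T) (n + 2) \<le> rvcl (edge_corona T K) \<and>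
         rvcl (edge_corona T K) \<le> 2 * m + n - 2"
proof -
  let ?C = "edge_corona T K"
  have wf: "wf_graph T" using assms(1) unfolding is_tree_def connected_graph_def by auto
  obtain c0 where c0: "locating_rainbow_coloring ?C (m + n) c0"
    using upper[OF assms(1,2,4,5,6)] by blast
  then have ex: "\<exists>c. locating_rainbow_coloring ?C (m + n) c" by blast
  have le: "rvcl ?C \<le> m + n" unfolding rvcl_def by (rule Least_le) (rule ex)
  obtain c where c: "locating_rainbow_coloring ?C (rvcl ?C) c"
    unfolding rvcl_def using LeastI_ex[of "\<lambda>k. \<exists>c. locating_rainbow_coloring ?C k c"] ex by blast
  have l1: "n + 2 \<le> rvcl ?C" using lower_n2[OF assms(1) _ assms(4,5,6) c] assms(2,3) by simp
  have l2: "rvc T \<le> rvcl ?C" using rvc_le[OF wf] c unfolding locating_rainbow_coloring_def by blast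
  show ?thesis using le l1 l2 assms(3) by simp
qed

end
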